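(* Let $B_1,\dots,B_D$ be resonator blocks and $\lambda\ge0$. Suppose every block propagation matrix $\mathcal{P}^\lambda_d$ ($d=1,\dots,D$) is hyperbolic and the family $\{\mathcal{P}^\lambda_1,\dots,\mathcal{P}^\lambda_D\}$ satisfies the source-sink condition. Suppose moreover that the line spanned by $(1,0)^\top$ lies in the connected component of $\mathbb{RP}^1\setminus\{s(\mathcal{P}^\lambda_1),\dots,s(\mathcal{P}^\lambda_D)\}$ containing all sinks $u(\mathcal{P}^\lambda_1),\dots,u(\mathcal{P}^\lambda_D)$. Then for every block sequence $\chi\in\{1,\dots,D\}^{\mathbb{Z}}$, the block propagation matrix cocycle $j\mapsto\mathcal{P}^\lambda_{\chi(j)}$ does not admit a uniformly hyperbolic splitting $(u,s)$ with $(1,0)^\top\in s(0)$.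
   Context: A resonator block $B_d$ is a finite sequence of $\mathrm{len}(B_d)\ge1$ triples $(v_k,\ell_k,s_k)$ of positive reals. With $P^\lambda_{\ell,s,v}=\begin{pmatrix}1-s\frac{\ell}{v^2}\lambda & s\\ -\frac{\ell}{v^2}\lambda & 1\end{pmatrix}$, the block propagation matrix is $\mathcal{P}^\lambda_d=P^\lambda_{\ell_L,s_L,v_L}\cdots P^\lambda_{\ell_1,s_1,v_1}\in\mathrm{SL}(2,\mathbb{R})$, $L=\mathrm{len}(B_d)$. $A\in\mathrm{SL}(2,\mathbb{R})$ is hyperbolic if $|\mathrm{tr}A|>2$; then with eigenvalues $|\xi_1|<1<|\xi_2|$ and eigenlines $E_1,E_2$ its source is $s(A)=E_1$ and sink $u(A)=E_2$ in $\mathbb{RP}^1$ (the space of lines in $\mathbb{R}^2$). The source-sink condition for hyperbolic $\{A_1,\dots,A_D\}$: all $u(A_d)$ lie in one connected component of $\mathbb{RP}^1\setminus\{s(A_1),\dots,s(A_D)\}$. A uniformly hyperbolic splitting of a bounded $A:\mathbb{Z}\to\mathrm{SL}(2,\mathbb{R})$ is a pair $s,u:\mathbb{Z}\to\mathbb{RP}^1$ with $A(j)u(j)=u(j+1)$, $A(j)s(j)=s(j+1)$ and constants $C>0,\eta>1$ with $\|A_{-n}(j)\vec u\|,\|A_n(j)\vec s\|\le C\eta^{-n}$ for all $j\in\mathbb{Z}$, $n\in\mathbb{N}$, unit $\vec u\in u(j)$, $\vec s\in s(j)$, where $A_n(j)=A(j+n-1)\cdots A(j)$, $A_{-n}(j)=A(j-n)^{-1}\cdots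 A(j-1)^{-1}$. *)

theory Defs
  imports "HOL-Analysis.Analysis"
begin

type_synonym mat2 = "real^2^2"
type_synonym triple = "real \<times> real \<times> real"   (* (v, l, s) *)

definition Pmat :: "real \<Rightarrow> real \<Rightarrow> real \<Rightarrow> real \<Rightarrow> mat2" where
  "Pmat lam l s v = vector [vector [1 - s * (l / v^2) * lam, s],
                            vector [- (l / v^2) * lam, 1]]"

definition resonator_block :: "triple list \<Rightarrow> bool" where
  "resonator_block B \<longleftrightarrow> B \<noteq> [] \<and>
     (\<forall>(v, l, s) \<in> set B. v > 0 \<and> l > 0 \<and> s > 0)"

(* block propagation matrix P_L ... P_1 (first triple acts first) *)
definition block_mat :: "real \<Rightarrow> triple list \<Rightarrow> mat2" where
  "block_mat lam B = foldl (\<lambda>M (v, l, s). Pmat lam l s v ** M) (mat 1) B"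

definition hyperbolic :: "mat2 \<Rightarrow> bool" where
  "hyperbolic A \<longleftrightarrow> \<bar>trace A\<bar> > 2"

(* lines through the origin = points of RP^1 *)
definition is_line :: "(real^2) set \<Rightarrow> bool" where
  "is_line L \<longleftrightarrow> subspace L \<and> dim L = 1"

definition src :: "mat2 \<Rightarrow> (real^2) set" where
  "src A = {x. \<exists>\<xi>. \<bar>\<xi>\<bar> < 1 \<and> A *v x = \<xi> *\<^sub>R x}"

definition snk :: "mat2 \<Rightarrow> (real^2) set" where
  "snk A = {x. \<exists>\<xi>. \<bar>\<xi>\<bar> > 1 \<and> A *v x = \<xi> *\<^sub>R x}"

(* standard homeomorphism RP^1 -> unit circle: line through (a,b) \<mapsto> ((a+ib)/|a+ib|)^2 *)
definition rp1 :: "(real^2) set \<Rightarrow> complex" where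
  "rp1 L = (let x = (SOME x. x \<in> L \<and> x \<noteq> 0); z = Complex (x$1) (x$2)
            in (z / complex_of_real (cmod z))^2)"

definition source_sink :: "(nat \<Rightarrow> mat2) \<Rightarrow> nat \<Rightarrow> bool" where
  "source_sink A D \<longleftrightarrow>
     (\<exists>C \<in> components (sphere 0 1 - (\<lambda>d. rp1 (src (A d))) ` {1..D}).
        \<forall>d\<in>{1..D}. rp1 (snk (A d)) \<in> C)"

fun fwd :: "(int \<Rightarrow> mat2) \<Rightarrow> int \<Rightarrow> nat \<Rightarrow> mat2" where
  "fwd A j 0 = mat 1"
| "fwd A j (Suc n) = A (j + int n) ** fwd A j n"

fun bwd :: "(int \<Rightarrow> mat2) \<Rightarrow> int \<Rightarrow> nat \<Rightarrow> mat2" where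
  "bwd A j 0 = mat 1"
| "bwd A j (Suc n) = matrix_inv (A (j - int n - 1)) ** bwd A j n"

definition unif_hyp_splitting ::
  "(int \<Rightarrow> mat2) \<Rightarrow> (int \<Rightarrow> (real^2) set) \<Rightarrow> (int \<Rightarrow> (real^2) set) \<Rightarrow> bool" where
  "unif_hyp_splitting A u s \<longleftrightarrow>
     (\<forall>j. is_line (u j) \<and> is_line (s j)) \<and>
     (\<forall>j. (\<lambda>x. A j *v x) ` u j = u (j + 1) \<and> (\<lambda>x. A j *v x) ` s j = s (j + 1)) \<and>
     (\<exists>C>0. \<exists>\<eta>>1. \<forall>j n. \<forall>x y.
        x \<in> u j \<and> norm x = 1 \<and> y \<in> s j \<and> norm y = 1 \<longrightarrow>
          norm (bwd A j n *v x) \<le> C * \<eta> powr (- real n) \<and>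
          norm (fwd A j n *v y) \<le> C * \<eta> powr (- real n))"

end

theory Submission
  imports Defs
begin


definition w :: "real^2 \<Rightarrow> real^2 \<Rightarrow> real" where
  "w x y = x$1 * y$2 - x$2 * y$1"

lemma mv_1: "((A::mat2) *v x)$1 = A$1$1 * x$1 + A$1$2 * x$2"
  and mv_2: "((A::mat2) *v x)$2 = A$2$1 * x$1 + A$2$2 * x$2"
  by (simp_all add: matrix_vector_mult_def sum_2)

lemma w_A: "w ((A::mat2) *v x) (A *v y) = det A * w x y"
  by (simp add: w_def mv_1 mv_2 det_2 algebra_simps)

lemma det_Pmat: "det (Pmat lam l s v) = 1"
  by (simp add: Pmat_def det_2 algebra_simps)

lemma det_foldl: "det (foldl (\<lambda>M (v, l, s). Pmat lam l s v ** M) M0 B) = det M0"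
  by (induction B arbitrary: M0) (auto simp: det_mul det_Pmat)

lemma det_block: "det (block_mat lam B) = 1"
  unfolding block_mat_def by (simp add: det_foldl det_I)

lemma w_scale1[simp]: "w (c *\<^sub>R x) y = c * w x y" and w_scale2[simp]: "w x (c *\<^sub>R y) = c * w x y"
  and w_add1[simp]: "w (x + x') y = w x y + w x' y" and w_add2[simp]: "w x (y + y') = w x y + w x y'"
  and w_diff1[simp]: "w (x - x') y = w x y - w x' y" and w_diff2[simp]: "w x (y - y') = w x y - w x y'"
  and w_minus1[simp]: "w (- x) y = - w x y" and w_minus2[simp]: "w x (- y) = - w x y"
  by (simp_all add: w_def algebra_simps)

lemma cramer: "w p q *\<^sub>R x = w x q *\<^sub>R p + w p x *\<^sub>R q"
  by (simp add: vec_eq_iff forall_2 w_def algebra_simps)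

lemma plucker: "w x q * w p y - w y q * w p x = w p q * w x y"
  by (simp add: w_def algebra_simps)

lemma w_zero_par: assumes "w x u = 0" "u \<noteq> 0" shows "\<exists>t. x = t *\<^sub>R u"
proof (cases "u$1 = 0")
  case True
  then have "u$2 \<noteq> 0" using assms(2) by (auto simp: vec_eq_iff forall_2)
  then show ?thesis using assms True
    by (intro exI[of _ "x$2 / u$2"]) (auto simp: vec_eq_iff forall_2 w_def field_simps)
next
  case False
  then show ?thesis using assms
    by (intro exI[of _ "x$1 / u$1"]) (auto simp: vec_eq_iff forall_2 w_def field_simps)
qed



lemma trace2: "trace (A::mat2) = A$1$1 + A$2$2"
  by (simp add: trace_def sum_2)

lemma eigvec_exists:
  fixes A :: mat2
  assumes "det A = 1" "\<mu>^2 - trace A * \<mu> + 1 = 0"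
  shows "\<exists>x. x \<noteq> 0 \<and> A *v x = \<mu> *\<^sub>R x"
proof -
  have ch: "\<mu>^2 - (A$1$1 + A$2$2) * \<mu> + (A$1$1 * A$2$2 - A$1$2 * A$2$1) = 0"
    using assms by (simp add: trace2 det_2)
  show ?thesis
  proof (cases "A$1$2 = 0")
    case False
    let ?x = "vector [A$1$2, \<mu> - A$1$1] :: real^2"
    have "?x \<noteq> 0" using False by (auto simp: vec_eq_iff forall_2)
    moreover have "A *v ?x = \<mu> *\<^sub>R ?x"
      using ch by (simp add: vec_eq_iff forall_2 mv_1 mv_2 power2_eq_square algebra_simps)
    ultimately show ?thesis by blast
  next
    case b0: True
    show ?thesis
    proof (cases "A$2$1 = 0")
      case False
      let ?x = "vector [\<mu> - A$2$2, A$2$1] :: real^2"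
      have "?x \<noteq> 0" using False by (auto simp: vec_eq_iff forall_2)
      moreover have "A *v ?x = \<mu> *\<^sub>R ?x"
        using ch b0 by (simp add: vec_eq_iff forall_2 mv_1 mv_2 power2_eq_square algebra_simps)
      ultimately show ?thesis by blast
    next
      case True
      have "(\<mu> - A$1$1) * (\<mu> - A$2$2) = 0" using ch b0 True by (simp add: power2_eq_square algebra_simps)
      then have "\<mu> = A$1$1 \<or> \<mu> = A$2$2" by simp
      then show ?thesis
      proof
        assume h: "\<mu> = A$1$1"
        let ?x = "vector [1, 0] :: real^2"
        have "?x \<noteq> 0" by (auto simp: vec_eq_iff forall_2)
        moreover have "A *v ?x = \<mu> *\<^sub>R ?x"
          using h b0 True by (simp add: vec_eq_iff forall_2 mv_1 mv_2)
        ultimately show ?thesis by blast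
      next
        assume h: "\<mu> = A$2$2"
        let ?x = "vector [0, 1] :: real^2"
        have "?x \<noteq> 0" by (auto simp: vec_eq_iff forall_2)
        moreover have "A *v ?x = \<mu> *\<^sub>R ?x"
          using h b0 True by (simp add: vec_eq_iff forall_2 mv_1 mv_2)
        ultimately show ?thesis by blast
      qed
    qed
  qed
qed

definition eigsnk :: "mat2 \<Rightarrow> real^2 \<Rightarrow> bool" where
  "eigsnk A u \<longleftrightarrow> u \<noteq> 0 \<and> (\<exists>l. \<bar>l\<bar> > 1 \<and> A *v u = l *\<^sub>R u)"
definition eigsrc :: "mat2 \<Rightarrow> real^2 \<Rightarrow> bool" where
  "eigsrc A u \<longleftrightarrow> u \<noteq> 0 \<and> (\<exists>l. \<bar>l\<bar> < 1 \<and> A *v u = l *\<^sub>R u)"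

lemma quad_roots:
  fixes t r :: real
  assumes "r^2 = t^2 - 4"
  shows "((t + r)/2)^2 - t * ((t + r)/2) + 1 = 0" "((t - r)/2)^2 - t * ((t - r)/2) + 1 = 0"
    "((t + r)/2) * ((t - r)/2) = 1"
proof -
  have "((t + r)/2)^2 - t * ((t + r)/2) + 1 = (r^2 - t^2 + 4) / 4"
    by (simp add: power2_eq_square field_simps)
  then show "((t + r)/2)^2 - t * ((t + r)/2) + 1 = 0" using assms by simp
  have "((t - r)/2)^2 - t * ((t - r)/2) + 1 = (r^2 - t^2 + 4) / 4"
    by (simp add: power2_eq_square field_simps)
  then show "((t - r)/2)^2 - t * ((t - r)/2) + 1 = 0" using assms by simp
  have "((t + r)/2) * ((t - r)/2) = (t^2 - r^2) / 4"
    by (simp add: power2_eq_square field_simps)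
  then show "((t + r)/2) * ((t - r)/2) = 1" using assms by simp
qed

lemma small_of_big: "\<bar>a\<bar> > 1 \<Longrightarrow> a * b = (1::real) \<Longrightarrow> \<bar>b\<bar> < 1"
proof -
  assume h: "\<bar>a\<bar> > 1" "a * b = 1"
  then have "b = 1 / a" by (auto simp: field_simps)
  then have "\<bar>b\<bar> = 1 / \<bar>a\<bar>" by simp
  then show ?thesis using h(1) by simp
qed

lemma eig_exist:
  fixes A :: mat2
  assumes "det A = 1" "hyperbolic A"
  shows "(\<exists>u. eigsnk A u) \<and> (\<exists>s. eigsrc A s)"
proof -
  define t where "t = trace A"
  have t: "\<bar>t\<bar> > 2" using assms(2) by (simp add: hyperbolic_def t_def)
  define r where "r = sqrt (t^2 - 4)"
  have "(2::real)^2 < \<bar>t\<bar>^2" using t by (intro power_strict_mono) auto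
  then have t4: "t^2 > 4" by simp
  have r2: "r^2 = t^2 - 4" unfolding r_def using t4
    by (intro real_sqrt_pow2) (use t4 in linarith)
  have r0: "r \<ge> 0" unfolding r_def using t4 by simp
  note qr = quad_roots[OF r2]
  have "\<exists>l1 l2. l1^2 - t * l1 + 1 = 0 \<and> l2^2 - t * l2 + 1 = 0 \<and> \<bar>l1\<bar> > 1 \<and> \<bar>l2\<bar> < 1"
  proof (cases "t > 0")
    case True
    have "\<bar>(t + r)/2\<bar> > 1" using True t r0 by simp
    moreover have "\<bar>(t - r)/2\<bar> < 1" using small_of_big[OF calculation qr(3)] .
    ultimately show ?thesis using qr by blast
  next
    case False
    have "\<bar>(t - r)/2\<bar> > 1" using False t r0 by simp
    moreover have "\<bar>(t + r)/2\<bar> < 1" 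
    proof -
      have "((t - r)/2) * ((t + r)/2) = 1" using qr(3) by (simp only: mult.commute)
      then show ?thesis using small_of_big[OF \<open>\<bar>(t - r)/2\<bar> > 1\<close>] by blast
    qed
    ultimately show ?thesis using qr by blast
  qed
  then obtain l1 l2 where e: "l1^2 - t * l1 + 1 = 0" "l2^2 - t * l2 + 1 = 0" "\<bar>l1\<bar> > 1" "\<bar>l2\<bar> < 1"
    by blast
  obtain u where "u \<noteq> 0" "A *v u = l1 *\<^sub>R u" using eigvec_exists[OF assms(1)] e t_def by blast
  moreover obtain s where "s \<noteq> 0" "A *v s = l2 *\<^sub>R s" using eigvec_exists[OF assms(1)] e t_def by blast
  ultimately show ?thesis using e unfolding eigsnk_def eigsrc_def by blast
qed



definition zc :: "real^2 \<Rightarrow> complex" where "zc v = Complex (v$1) (v$2)"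
definition zeta :: "real^2 \<Rightarrow> complex" where
  "zeta v = (zc v / complex_of_real (cmod (zc v)))^2"
definition rv :: "real \<Rightarrow> real^2" where "rv a = vector [cos a, sin a]"

lemma zc_scale: "zc (t *\<^sub>R u) = complex_of_real t * zc u"
  by (simp add: zc_def complex_eq_iff)

lemma zc_nz: "v \<noteq> 0 \<Longrightarrow> zc v \<noteq> 0"
  by (auto simp: zc_def complex_eq_iff vec_eq_iff forall_2)

lemma zeta_scale: assumes "t \<noteq> 0" shows "zeta (t *\<^sub>R u) = zeta u"
proof (cases "zc u = 0")
  case True then show ?thesis by (simp add: zeta_def zc_scale)
next
  case False
  have "zeta (t *\<^sub>R u) = (complex_of_real (t / \<bar>t\<bar>))^2 * zeta u"
    using assms False by (simp add: zeta_def zc_scale norm_mult power_mult_distrib field_simps)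
  also have "(t / \<bar>t\<bar>)^2 = 1" using assms by (simp add: power_divide)
  then have "(complex_of_real (t / \<bar>t\<bar>))^2 = 1" by (metis of_real_1 of_real_power)
  finally show ?thesis by simp
qed

lemma zeta_unit: "v \<noteq> 0 \<Longrightarrow> cmod (zeta v) = 1"
  using zc_nz[of v] by (simp add: zeta_def norm_power norm_divide)

lemma rp1_line:
  assumes "u \<in> L" "u \<noteq> 0" "\<forall>x\<in>L. x \<noteq> 0 \<longrightarrow> (\<exists>t. x = t *\<^sub>R u)"
  shows "rp1 L = zeta u"
proof -
  define x where "x = (SOME x. x \<in> L \<and> x \<noteq> 0)"
  have "x \<in> L \<and> x \<noteq> 0" unfolding x_def by (rule someI[of _ u]) (use assms in auto)
  then obtain t where t: "x = t *\<^sub>R u" "t \<noteq> 0" using assms(3) by fastforce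
  have "rp1 L = zeta x" unfolding rp1_def zeta_def zc_def x_def Let_def by simp
  then show ?thesis using t zeta_scale by simp
qed

lemma par_of_eig:
  fixes A :: mat2
  assumes "det A = 1" "A *v u = l *\<^sub>R u" "A *v x = k *\<^sub>R x" "l * k \<noteq> 1" "u \<noteq> 0"
  shows "\<exists>t. x = t *\<^sub>R u"
proof -
  have "w (A *v x) (A *v u) = w x u" using w_A assms(1) by simp
  then have "(k * l - 1) * w x u = 0" using assms(2,3) by (simp add: algebra_simps)
  then have "w x u = 0" using assms(4) by (simp add: mult.commute)
  then show ?thesis using w_zero_par assms(5) by blast
qed

lemma rp1_snk: assumes "det A = 1" "eigsnk A u" shows "rp1 (snk A) = zeta u"
proof (rule rp1_line)
  obtain l where l: "\<bar>l\<bar> > 1" "A *v u = l *\<^sub>R u" "u \<noteq> 0" using assms(2) eigsnk_def by blast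
  show "u \<in> snk A" using l by (auto simp: snk_def)
  show "u \<noteq> 0" by fact
  show "\<forall>x\<in>snk A. x \<noteq> 0 \<longrightarrow> (\<exists>t. x = t *\<^sub>R u)"
  proof (intro ballI impI)
    fix x assume "x \<in> snk A" "x \<noteq> 0"
    then obtain k where k: "\<bar>k\<bar> > 1" "A *v x = k *\<^sub>R x" by (auto simp: snk_def)
    have "\<bar>l * k\<bar> > 1" using k l by (simp add: abs_mult less_1_mult)
    then have "l * k \<noteq> 1" by auto
    then show "\<exists>t. x = t *\<^sub>R u" using par_of_eig[OF assms(1) l(2) k(2)] l(3) by blast
  qed
qed

lemma rp1_src: assumes "det A = 1" "eigsrc A u" shows "rp1 (src A) = zeta u"
proof (rule rp1_line)
  obtain l where l: "\<bar>l\<bar> < 1" "A *v u = l *\<^sub>R u" "u \<noteq> 0" using assms(2) eigsrc_def by blast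
  show "u \<in> src A" using l by (auto simp: src_def)
  show "u \<noteq> 0" by fact
  show "\<forall>x\<in>src A. x \<noteq> 0 \<longrightarrow> (\<exists>t. x = t *\<^sub>R u)"
  proof (intro ballI impI)
    fix x assume "x \<in> src A" "x \<noteq> 0"
    then obtain k where k: "\<bar>k\<bar> < 1" "A *v x = k *\<^sub>R x" by (auto simp: src_def)
    have "\<bar>l\<bar> * \<bar>k\<bar> \<le> 1 * \<bar>k\<bar>" using l by (intro mult_right_mono) auto
    then have "\<bar>l * k\<bar> < 1" using k by (simp add: abs_mult)
    then have "l * k \<noteq> 1" by auto
    then show "\<exists>t. x = t *\<^sub>R u" using par_of_eig[OF assms(1) l(2) k(2)] l(3) by blast
  qed
qed

lemma cis_sq: "(cis a)^2 = cis (2 * a)"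
  by (simp only: power2_eq_square cis_mult mult_2)

lemma zeta_rv: "zeta (rv a) = cis (2 * a)"
proof -
  have "zc (rv a) = cis a" by (simp add: zc_def rv_def complex_eq_iff)
  then have "zeta (rv a) = (cis a)^2" by (simp add: zeta_def)
  then show ?thesis by (simp only: cis_sq)
qed

lemma zeta_e1: "zeta (vector [1, 0]) = 1"
proof -
  have "Complex 1 0 = 1" by (simp add: complex_eq_iff)
  then show ?thesis by (simp add: zeta_def zc_def)
qed

lemma w_rv: "w (rv a) (rv b) = sin (b - a)"
  by (simp add: w_def rv_def sin_diff)

lemma zeta_cis:
  assumes "v \<noteq> 0" "zeta v = cis (2 * a)"
  shows "\<exists>t. t \<noteq> 0 \<and> v = t *\<^sub>R rv a"
proof -
  define n where "n = cmod (zc v)"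
  have n: "n > 0" using zc_nz[OF assms(1)] by (simp add: n_def)
  define y where "y = zc v / complex_of_real n"
  have "y^2 = zeta v" by (simp add: zeta_def y_def n_def)
  then have "y^2 = (cis a)^2" using assms(2) by (simp only: cis_sq)
  then have "(y - cis a) * (y + cis a) = 0" by (simp add: power2_eq_square algebra_simps)
  then have "y = cis a \<or> y = - cis a" by (auto simp: add_eq_0_iff)
  have zv: "zc v = complex_of_real n * y" using n by (simp add: y_def)
  from \<open>y = cis a \<or> y = - cis a\<close> have "\<exists>t. t \<noteq> 0 \<and> zc v = complex_of_real t * cis a"
  proof
    assume "y = cis a" then show ?thesis using n zv by (intro exI[of _ n]) simp
  next
    assume "y = - cis a" then show ?thesis using n zv by (intro exI[of _ "- n"]) simp
  qed
  then obtain t where t: "t \<noteq> 0" "zc v = complex_of_real t * cis a" by blast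
  then have "v = t *\<^sub>R rv a"
    by (auto simp: vec_eq_iff forall_2 zc_def rv_def complex_eq_iff)
  then show ?thesis using t by blast
qed



lemma sign_core:
  fixes a b c d L N :: real
  assumes a: "a > 0" and b: "b > 0" and cd: "c * d < 0" and L: "L > 1" and N: "N < 1" and N0: "N \<ge> 0"
  shows "b * d * (a * d * (L - 1) - b * c * (1 - N)) > 0"
    and "a * c * (a * d * (N - 1) + b * c * (L - 1)) > 0"
    and "a * d - b * c \<noteq> 0"
proof -
  have cases: "(c < 0 \<and> d > 0) \<or> (c > 0 \<and> d < 0)" using cd
    by (auto simp: mult_less_0_iff)
  have L1: "L - 1 > 0" "1 - N > 0" "N - 1 < 0" using L N by auto
  have all: "b * d * (a * d * (L - 1) - b * c * (1 - N)) > 0 \<and>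
    a * c * (a * d * (N - 1) + b * c * (L - 1)) > 0 \<and> a * d - b * c \<noteq> 0"
  using cases proof
    assume h: "c < 0 \<and> d > 0"
    have ad: "a * d > 0" using a h by simp
    have bc: "b * c < 0" using b h by (simp add: mult_pos_neg)
    have ac: "a * c < 0" using a h by (simp add: mult_pos_neg)
    have bd: "b * d > 0" using b h by simp
    have t1: "a * d * (L - 1) > 0" using ad L1 by simp
    have t2: "b * c * (1 - N) < 0" using bc L1 by (simp add: mult_neg_pos)
    have t3: "a * d * (N - 1) < 0" using ad L1 by (simp add: mult_pos_neg)
    have t4: "b * c * (L - 1) < 0" using bc L1 by (simp add: mult_neg_pos)
    have "b * d * (a * d * (L - 1) - b * c * (1 - N)) > 0" using bd t1 t2 by simp
    moreover have "a * c * (a * d * (N - 1) + b * c * (L - 1)) > 0" using ac t3 t4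
      by (simp add: mult_neg_neg)
    moreover have "a * d - b * c \<noteq> 0" using ad bc by simp
    ultimately show ?thesis by blast
  next
    assume h: "c > 0 \<and> d < 0"
    have ad: "a * d < 0" using a h by (simp add: mult_pos_neg)
    have bc: "b * c > 0" using b h by simp
    have ac: "a * c > 0" using a h by simp
    have bd: "b * d < 0" using b h by (simp add: mult_pos_neg)
    have t1: "a * d * (L - 1) < 0" using ad L1 by (simp add: mult_neg_pos)
    have t2: "b * c * (1 - N) > 0" using bc L1 by simp
    have t3: "a * d * (N - 1) > 0" using ad L1 by (simp add: mult_neg_neg)
    have t4: "b * c * (L - 1) > 0" using bc L1 by simp
    have "b * d * (a * d * (L - 1) - b * c * (1 - N)) > 0" using bd t1 t2
      by (simp add: mult_neg_neg)
    moreover have "a * c * (a * d * (N - 1) + b * c * (L - 1)) > 0" using ac t3 t4 by simp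
    moreover have "a * d - b * c \<noteq> 0" using ad bc by simp
    ultimately show ?thesis by blast
  qed
  then show "b * d * (a * d * (L - 1) - b * c * (1 - N)) > 0"
    and "a * c * (a * d * (N - 1) + b * c * (L - 1)) > 0"
    and "a * d - b * c \<noteq> 0" by auto
qed

lemma cone_step:
  fixes A :: mat2 and p q u s :: "real^2"
  assumes det: "det A = 1" and Au: "A *v u = l *\<^sub>R u" and As: "A *v s = n *\<^sub>R s"
    and l: "\<bar>l\<bar> > 1"
    and W: "w p q > 0" and a: "w u q > 0" and b: "w p u > 0" and cd: "w s q * w p s < 0"
  shows "w (A *v p) q * w p (A *v p) > 0" "w (A *v q) q * w p (A *v q) > 0"
    "w (A *v q) q * w p (A *v p) > 0"
proof -
  define W' where "W' = w p q"
  define a' where "a' = w u q"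
  define b' where "b' = w p u"
  define c' where "c' = w s q"
  define d' where "d' = w p s"
  define \<Delta> where "\<Delta> = a' * d' - b' * c'"
  have cu: "W' *\<^sub>R u = a' *\<^sub>R p + b' *\<^sub>R q" using cramer unfolding W'_def a'_def b'_def by blast
  have cs: "W' *\<^sub>R s = c' *\<^sub>R p + d' *\<^sub>R q" using cramer unfolding W'_def c'_def d'_def by blast
  have l2: "l^2 > 1" using l by (metis abs_le_square_iff less_le_not_le abs_one one_power2 not_less power2_abs)
  have "w (W' *\<^sub>R u) (W' *\<^sub>R s) = w (a' *\<^sub>R p + b' *\<^sub>R q) (c' *\<^sub>R p + d' *\<^sub>R q)" using cu cs by simp
  then have wus: "W' * W' * w u s = \<Delta> * W'"
    by (simp add: \<Delta>_def W'_def algebra_simps w_def)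
  have "w (A *v u) (A *v s) = w u s" using w_A det by simp
  then have lnw: "(l * n - 1) * w u s = 0" using Au As by (simp add: algebra_simps)
  have W0: "W' > 0" using W W'_def by simp
  have Nz: "\<Delta> \<noteq> 0" and _: "True"
    using sign_core(3)[of a' b' c' d' 2 0] a b cd by (auto simp: a'_def b'_def c'_def d'_def \<Delta>_def)
  have "w u s \<noteq> 0" using wus W0 Nz by auto
  then have ln: "l * n = 1" using lnw by simp
  have n2: "n^2 < 1"
  proof -
    have "l^2 * n^2 = 1" using ln by (metis power_mult_distrib one_power2)
    then show ?thesis using l2
      by (metis less_1_mult not_less_iff_gr_or_eq zero_le_power2 less_le_not_le mult.commute mult_le_cancel_left1 )
  qed
  have ep: "\<Delta> *\<^sub>R p = W' *\<^sub>R (d' *\<^sub>R u - b' *\<^sub>R s)"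
  proof -
    have "W' *\<^sub>R (d' *\<^sub>R u - b' *\<^sub>R s) = d' *\<^sub>R (W' *\<^sub>R u) - b' *\<^sub>R (W' *\<^sub>R s)"
      by (simp add: algebra_simps)
    also have "\<dots> = d' *\<^sub>R (a' *\<^sub>R p + b' *\<^sub>R q) - b' *\<^sub>R (c' *\<^sub>R p + d' *\<^sub>R q)" using cu cs by simp
    also have "\<dots> = \<Delta> *\<^sub>R p" by (simp add: algebra_simps \<Delta>_def)
    finally show ?thesis by simp
  qed
  have eq: "\<Delta> *\<^sub>R q = W' *\<^sub>R (a' *\<^sub>R s - c' *\<^sub>R u)"
  proof -
    have "W' *\<^sub>R (a' *\<^sub>R s - c' *\<^sub>R u) = a' *\<^sub>R (W' *\<^sub>R s) - c' *\<^sub>R (W' *\<^sub>R u)"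
      by (simp add: algebra_simps)
    also have "\<dots> = a' *\<^sub>R (c' *\<^sub>R p + d' *\<^sub>R q) - c' *\<^sub>R (a' *\<^sub>R p + b' *\<^sub>R q)" using cu cs by simp
    also have "\<dots> = \<Delta> *\<^sub>R q" by (simp add: algebra_simps \<Delta>_def)
    finally show ?thesis by simp
  qed
  have Ap: "\<Delta> *\<^sub>R (A *v p) = W' *\<^sub>R (d' * l) *\<^sub>R u - W' *\<^sub>R (b' * n) *\<^sub>R s"
  proof -
    have "\<Delta> *\<^sub>R (A *v p) = A *v (\<Delta> *\<^sub>R p)" by (simp add: matrix_vector_mult_scaleR)
    also have "\<dots> = A *v (W' *\<^sub>R (d' *\<^sub>R u - b' *\<^sub>R s))" using ep by simp
    also have "\<dots> = W' *\<^sub>R (d' *\<^sub>R (A *v u) - b' *\<^sub>R (A *v s))"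
      by (simp add: matrix_vector_mult_scaleR matrix_vector_right_distrib matrix_vector_mult_diff_distrib)
    also have "\<dots> = W' *\<^sub>R (d' * l) *\<^sub>R u - W' *\<^sub>R (b' * n) *\<^sub>R s" using Au As by (simp add: algebra_simps)
    finally show ?thesis .
  qed
  have Aq: "\<Delta> *\<^sub>R (A *v q) = W' *\<^sub>R (a' * n) *\<^sub>R s - W' *\<^sub>R (c' * l) *\<^sub>R u"
  proof -
    have "\<Delta> *\<^sub>R (A *v q) = A *v (\<Delta> *\<^sub>R q)" by (simp add: matrix_vector_mult_scaleR)
    also have "\<dots> = A *v (W' *\<^sub>R (a' *\<^sub>R s - c' *\<^sub>R u))" using eq by simp
    also have "\<dots> = W' *\<^sub>R (a' *\<^sub>R (A *v s) - c' *\<^sub>R (A *v u))"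
      by (simp add: matrix_vector_mult_scaleR matrix_vector_right_distrib matrix_vector_mult_diff_distrib)
    also have "\<dots> = W' *\<^sub>R (a' * n) *\<^sub>R s - W' *\<^sub>R (c' * l) *\<^sub>R u" using As Au by (simp add: algebra_simps)
    finally show ?thesis .
  qed
  have wuq: "w u q = a'" "w p u = b'" "w s q = c'" "w p s = d'" by (simp_all add: a'_def b'_def c'_def d'_def)
  have x1: "\<Delta> * w (A *v p) q = W' * (d' * l * a' - b' * n * c')"
    using arg_cong[OF Ap, of "\<lambda>x. w x q"] wuq by (simp add: algebra_simps)
  have y1: "\<Delta> * w p (A *v p) = W' * (d' * l * b' - b' * n * d')"
    using arg_cong[OF Ap, of "\<lambda>x. w p x"] wuq by (simp add: algebra_simps)
  have x2: "\<Delta> * w (A *v q) q = W' * (a' * n * c' - c' * l * a')"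
    using arg_cong[OF Aq, of "\<lambda>x. w x q"] wuq by (simp add: algebra_simps)
  have y2: "\<Delta> * w p (A *v q) = W' * (a' * n * d' - c' * l * b')"
    using arg_cong[OF Aq, of "\<lambda>x. w p x"] wuq by (simp add: algebra_simps)
  have sc: "b' * d' * (a' * d' * (l^2 - 1) - b' * c' * (1 - n^2)) > 0"
       "a' * c' * (a' * d' * (n^2 - 1) + b' * c' * (l^2 - 1)) > 0"
  proof -
    have a1: "a' > 0" "b' > 0" "c' * d' < 0" using a b cd by (simp_all add: a'_def b'_def c'_def d'_def)
    show "b' * d' * (a' * d' * (l^2 - 1) - b' * c' * (1 - n^2)) > 0"
      by (rule sign_core(1)[OF a1 l2 n2 zero_le_power2])
    show "a' * c' * (a' * d' * (n^2 - 1) + b' * c' * (l^2 - 1)) > 0"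
      by (rule sign_core(2)[OF a1 l2 n2 zero_le_power2])
  qed
  have D2: "\<Delta> * \<Delta> > 0" using Nz by (simp add: zero_less_mult_iff linorder_neq_iff disj_commute)
  have WW: "W' * W' > 0" using W0 by simp
  have "(\<Delta> * \<Delta>) * (w (A *v p) q * w p (A *v p)) = (\<Delta> * w (A *v p) q) * (\<Delta> * w p (A *v p))"
    by (simp only: mult_ac)
  also have "\<dots> = W' * W' * (b' * d' * (a' * d' * (l^2 - 1) - b' * c' * (1 - n^2)))"
    unfolding x1 y1 using ln by (simp add: power2_eq_square algebra_simps)
  finally have "(\<Delta> * \<Delta>) * (w (A *v p) q * w p (A *v p)) > 0" using sc WW by (simp only: mult_pos_pos)
  then show "w (A *v p) q * w p (A *v p) > 0" using D2 by (simp add: zero_less_mult_iff)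
  have "(\<Delta> * \<Delta>) * (w (A *v q) q * w p (A *v q)) = (\<Delta> * w (A *v q) q) * (\<Delta> * w p (A *v q))"
    by (simp only: mult_ac)
  also have "\<dots> = W' * W' * (a' * c' * (a' * d' * (n^2 - 1) + b' * c' * (l^2 - 1)))"
    unfolding x2 y2 using ln by (simp add: power2_eq_square algebra_simps)
  finally have "(\<Delta> * \<Delta>) * (w (A *v q) q * w p (A *v q)) > 0" using sc WW by (simp only: mult_pos_pos)
  then show "w (A *v q) q * w p (A *v q) > 0" using D2 by (simp add: zero_less_mult_iff)
  have ln2: "l \<noteq> n"
  proof
    assume "l = n" then have "l^2 = 1" using ln by (simp add: power2_eq_square)
    then show False using l2 by simp
  qed
  have "(l - n)^2 > 0" using ln2 by simp
  moreover have "- (c' * d') > 0" using cd by (simp add: c'_def d'_def)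
  moreover have "a' * b' > 0" using a b by (simp add: a'_def b'_def)
  ultimately have pos3: "(l - n)^2 * (- (c' * d')) * (a' * b') > 0" by (simp only: mult_pos_pos)
  have "(\<Delta> * \<Delta>) * (w (A *v q) q * w p (A *v p)) = (\<Delta> * w (A *v q) q) * (\<Delta> * w p (A *v p))"
    by (simp only: mult_ac)
  also have "\<dots> = W' * W' * ((l - n)^2 * (- (c' * d')) * (a' * b'))"
    unfolding x2 y1 by (simp add: power2_eq_square algebra_simps)
  finally have "(\<Delta> * \<Delta>) * (w (A *v q) q * w p (A *v p)) > 0" using pos3 WW by (simp only: mult_pos_pos)
  then show "w (A *v q) q * w p (A *v p) > 0" using D2 by (simp add: zero_less_mult_iff)
qed



lemma growth:
  fixes A :: mat2
  assumes det: "det A = 1" and W: "w p q > 0"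
    and h1: "w (A *v p) q * w p (A *v p) > 0" and h2: "w (A *v q) q * w p (A *v q) > 0"
    and g: "w v q * w p v \<ge> 0"
  shows "w (A *v v) q * w p (A *v v) \<ge> (1 + 2 * (w (A *v q) q * w p (A *v p)) / (w p q)^2) * (w v q * w p v)"
proof -
  define W' where "W' = w p q"
  define X where "X = w v q"
  define Y where "Y = w p v"
  define a1 where "a1 = w (A *v p) q"
  define b1 where "b1 = w p (A *v p)"
  define a2 where "a2 = w (A *v q) q"
  define b2 where "b2 = w p (A *v q)"
  have cv: "W' *\<^sub>R v = X *\<^sub>R p + Y *\<^sub>R q" using cramer unfolding W'_def X_def Y_def by blast
  have "W' *\<^sub>R (A *v v) = A *v (W' *\<^sub>R v)" by (simp add: matrix_vector_mult_scaleR)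
  also have "\<dots> = X *\<^sub>R (A *v p) + Y *\<^sub>R (A *v q)"
    using cv by (simp add: matrix_vector_mult_scaleR matrix_vector_right_distrib)
  finally have cav: "W' *\<^sub>R (A *v v) = X *\<^sub>R (A *v p) + Y *\<^sub>R (A *v q)" .
  have e1: "W' * w (A *v v) q = X * a1 + Y * a2"
    using arg_cong[OF cav, of "\<lambda>x. w x q"] by (simp add: a1_def a2_def)
  have e2: "W' * w p (A *v v) = X * b1 + Y * b2"
    using arg_cong[OF cav, of "\<lambda>x. w p x"] by (simp add: b1_def b2_def)
  have pl: "a1 * b2 - a2 * b1 = W' * W'"
    using plucker[of "A *v p" q p "A *v q"] w_A[of A p q] det
    by (simp add: a1_def a2_def b1_def b2_def W'_def)
  have W0: "W' > 0" using W by (simp add: W'_def)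
  have "W' * W' * (w (A *v v) q * w p (A *v v)) = (X * a1 + Y * a2) * (X * b1 + Y * b2)"
    using e1 e2 by (metis mult.assoc mult.left_commute)
  also have "\<dots> = (a1 * b1) * (X * X) + (a2 * b2) * (Y * Y) + (a1 * b2 - a2 * b1 + 2 * (a2 * b1)) * (X * Y)"
    by (simp add: algebra_simps)
  also have "\<dots> = (a1 * b1) * (X * X) + (a2 * b2) * (Y * Y) + (W' * W' + 2 * (a2 * b1)) * (X * Y)"
    using pl by simp
  also have "\<dots> \<ge> (W' * W' + 2 * (a2 * b1)) * (X * Y)"
  proof -
    have "(a1 * b1) * (X * X) \<ge> 0" using h1 by (simp add: a1_def b1_def)
    moreover have "(a2 * b2) * (Y * Y) \<ge> 0" using h2 by (simp add: a2_def b2_def)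
    ultimately show ?thesis by simp
  qed
  finally have ineq: "(W' * W' + 2 * (a2 * b1)) * (X * Y) \<le> W' * W' * (w (A *v v) q * w p (A *v v))" .
  have "(1 + 2 * (a2 * b1) / W'^2) * (X * Y) = ((W' * W' + 2 * (a2 * b1)) * (X * Y)) / (W' * W')"
    using W0 by (simp add: power2_eq_square field_simps)
  also have "\<dots> \<le> (W' * W' * (w (A *v v) q * w p (A *v v))) / (W' * W')"
    using ineq W0 by (intro divide_right_mono) auto
  also have "\<dots> = w (A *v v) q * w p (A *v v)" using W0 by simp
  finally show ?thesis by (simp add: a2_def b1_def X_def Y_def W'_def)
qed

lemma w_bound:
  assumes "\<bar>q$1\<bar> \<le> 1" "\<bar>q$2\<bar> \<le> 1"
  shows "\<bar>w v q\<bar> \<le> 2 * norm v"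
proof -
  have "\<bar>w v q\<bar> \<le> \<bar>v$1\<bar> * \<bar>q$2\<bar> + \<bar>v$2\<bar> * \<bar>q$1\<bar>"
    unfolding w_def by (simp add: abs_mult[symmetric] abs_triangle_ineq4)
  also have "\<dots> \<le> norm v * 1 + norm v * 1"
    using assms component_le_norm_cart[of v 1] component_le_norm_cart[of v 2]
    by (intro add_mono mult_mono) auto
  finally show ?thesis by simp
qed



lemma unit_arg_inj:
  fixes x y :: complex
  assumes "norm x = 1" "norm y = 1" "Arg2pi x = Arg2pi y" shows "x = y"
  using assms complex_norm_eq_1_exp by metis

lemma unit_not_nonneg:
  fixes x :: complex
  assumes "norm x = 1" "x \<noteq> 1" shows "x \<notin> \<real>\<^sub>\<ge>\<^sub>0"
proof
  assume h: "x \<in> \<real>\<^sub>\<ge>\<^sub>0"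
  then have r: "Re x = 1" using nonneg_Reals_cmod_eq_Re assms(1) by simp
  have "(cmod x)^2 = (Re x)^2 + (Im x)^2" by (simp add: cmod_power2)
  then have "Im x = 0" using r assms(1) by simp
  then have "x = 1" using r by (simp add: complex_eq_iff)
  then show False using assms(2) by simp
qed

lemma circ_interval:
  fixes C :: "complex set" and \<sigma> :: complex
  assumes C: "connected C" "C \<subseteq> sphere 0 1" "\<sigma> \<notin> C" and s1: "norm \<sigma> = 1"
    and x: "x \<in> C" and y: "y \<in> C" and z: "norm z = 1"
    and le: "Arg2pi (x / \<sigma>) \<le> Arg2pi (z / \<sigma>)" "Arg2pi (z / \<sigma>) \<le> Arg2pi (y / \<sigma>)"
  shows "z \<in> C"
proof -
  have s0: "\<sigma> \<noteq> 0"
  proof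
    assume "\<sigma> = 0" then have "norm \<sigma> = 0" by simp
    then show False using s1 by simp
  qed
  have cont: "continuous_on C (\<lambda>c. Arg2pi (c / \<sigma>))"
  proof (rule continuous_at_imp_continuous_on, intro ballI)
    fix c assume c: "c \<in> C"
    have nc: "norm c = 1" using c C(2) by auto
    have "c \<noteq> \<sigma>" using c C(3) by auto
    then have "c / \<sigma> \<noteq> 1" using s0 by auto
    moreover have "norm (c / \<sigma>) = 1" using nc s1 by (simp add: norm_divide)
    ultimately have "c / \<sigma> \<notin> \<real>\<^sub>\<ge>\<^sub>0" using unit_not_nonneg by blast
    then have "isCont Arg2pi (c / \<sigma>)" by (rule continuous_at_Arg2pi)
    moreover have "isCont (\<lambda>c. c / \<sigma>) c" by (intro continuous_intros) (rule s0)
    ultimately show "isCont (\<lambda>c. Arg2pi (c / \<sigma>)) c" using isCont_o2 by blast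
  qed
  have conn: "connected ((\<lambda>c. Arg2pi (c / \<sigma>)) ` C)"
    using connected_continuous_image[OF cont C(1)] .
  have "Arg2pi (z / \<sigma>) \<in> (\<lambda>c. Arg2pi (c / \<sigma>)) ` C"
    using connected_contains_Icc[OF conn, of "Arg2pi (x / \<sigma>)" "Arg2pi (y / \<sigma>)"] x y le by auto
  then obtain c where c: "c \<in> C" "Arg2pi (c / \<sigma>) = Arg2pi (z / \<sigma>)" by auto
  have "norm c = 1" using c C(2) by auto
  then have "c / \<sigma> = z / \<sigma>"
    using unit_arg_inj[of "c / \<sigma>" "z / \<sigma>"] c(2) s1 z by (simp add: norm_divide)
  then have "c = z" using s0 by simp
  then show ?thesis using c by simp
qed



lemma unit_cis: "norm (x::complex) = 1 \<Longrightarrow> x = cis (Arg2pi x)"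
  using complex_norm_eq_1_exp cis_conv_exp by metis

lemma angle_rep:
  assumes s1: "norm \<sigma> = 1" and v: "v \<noteq> 0"
  shows "\<exists>t. t \<noteq> 0 \<and> v = t *\<^sub>R rv (Arg2pi \<sigma> / 2 + Arg2pi (zeta v / \<sigma>) / 2)"
proof -
  have s0: "\<sigma> \<noteq> 0"
  proof
    assume "\<sigma> = 0" then have "norm \<sigma> = 0" by simp
    then show False using s1 by simp
  qed
  have "norm (zeta v / \<sigma>) = 1" using zeta_unit[OF v] s1 by (simp add: norm_divide)
  then have r: "zeta v / \<sigma> = cis (Arg2pi (zeta v / \<sigma>))" by (rule unit_cis)
  have "zeta v = \<sigma> * (zeta v / \<sigma>)" using s0 by simp
  also have "\<dots> = cis (Arg2pi \<sigma>) * cis (Arg2pi (zeta v / \<sigma>))"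
    using unit_cis[OF s1] r by simp
  also have "\<dots> = cis (2 * (Arg2pi \<sigma> / 2 + Arg2pi (zeta v / \<sigma>) / 2))"
    by (simp add: cis_mult)
  finally show ?thesis using zeta_cis[OF v] by blast
qed

lemma w_Rv: "w (rv (f + a / 2)) (rv (f + b / 2)) = sin ((b - a) / 2)"
proof -
  have "(f + b / 2) - (f + a / 2) = (b - a) / 2" by (simp add: field_simps)
  then show ?thesis by (simp only: w_rv)
qed

lemma sin_half_pos: "0 < x \<Longrightarrow> x < 2 * pi \<Longrightarrow> sin (x / 2) > 0"
  by (intro sin_gt_zero) auto

lemma sin_half_neg: "- 2 * pi < x \<Longrightarrow> x < 0 \<Longrightarrow> sin (x / 2) < 0"
proof -
  assume "- 2 * pi < x" "x < 0"
  then have "sin ((- x) / 2) > 0" by (intro sin_half_pos) auto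
  then show ?thesis by simp
qed

lemma rv_comp: "\<bar>rv a $ 1\<bar> \<le> 1" "\<bar>rv a $ 2\<bar> \<le> 1"
  by (simp_all add: rv_def)



lemma arg_pos: assumes "norm (x::complex) = 1" "x \<noteq> 1" shows "Arg2pi x > 0"
proof -
  have "Arg2pi x \<ge> 0" using Arg2pi by blast
  moreover have "Arg2pi x \<noteq> 0"
  proof
    assume "Arg2pi x = 0"
    then have "x = cis 0" using unit_cis[OF assms(1)] by simp
    then show False using assms(2) by simp
  qed
  ultimately show ?thesis by simp
qed

lemma cone_exists:
  fixes U S :: "nat \<Rightarrow> real^2" and e :: "real^2" and C :: "complex set"
  assumes D: "D \<ge> 1" and U: "\<forall>d\<in>{1..D}. U d \<noteq> 0" and S: "\<forall>d\<in>{1..D}. S d \<noteq> 0" and e: "e \<noteq> 0"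
    and C: "C \<in> components (sphere 0 1 - (\<lambda>d. zeta (S d)) ` {1..D})"
    and UC: "\<forall>d\<in>{1..D}. zeta (U d) \<in> C" and eC: "zeta e \<in> C"
  shows "\<exists>p q. w p q > 0 \<and> (\<forall>v. \<bar>w v q\<bar> \<le> 2 * norm v \<and> \<bar>w v p\<bar> \<le> 2 * norm v) \<and>
     (\<forall>d\<in>{1..D}. \<exists>u s. (\<exists>t. t \<noteq> 0 \<and> U d = t *\<^sub>R u) \<and> (\<exists>t. t \<noteq> 0 \<and> S d = t *\<^sub>R s) \<and>
        w u q > 0 \<and> w p u > 0 \<and> w s q * w p s < 0) \<and> w e q * w p e > 0"
proof -
  have D1: "1 \<in> {1..D}" using D by simp
  define \<sigma> where "\<sigma> = zeta (S 1)"
  have s1: "norm \<sigma> = 1" unfolding \<sigma>_def using zeta_unit S D1 by blast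
  have s0: "\<sigma> \<noteq> 0"
  proof
    assume "\<sigma> = 0" then have "norm \<sigma> = 0" by simp
    then show False using s1 by simp
  qed
  define f0 where "f0 = Arg2pi \<sigma> / 2"
  define h where "h z = Arg2pi (z / \<sigma>)" for z
  define Th where "Th v = h (zeta v)" for v
  have rep: "\<exists>t. t \<noteq> 0 \<and> v = t *\<^sub>R rv (f0 + Th v / 2)" if "v \<noteq> 0" for v
    using angle_rep[OF s1 that] unfolding f0_def Th_def h_def by simp
  have Th_rng: "0 \<le> Th v \<and> Th v < 2 * pi" for v unfolding Th_def h_def using Arg2pi by blast
  define F where "F = (\<lambda>d. zeta (S d)) ` {1..D}"
  have Csub: "C \<subseteq> sphere 0 1 - F" using in_components_subset[OF C] F_def by simp
  have Cconn: "connected C" using in_components_connected[OF C] .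
  have sF: "\<sigma> \<in> F" unfolding F_def \<sigma>_def using D1 by blast
  have sC: "\<sigma> \<notin> C" using Csub sF by blast
  have Csph: "C \<subseteq> sphere 0 1" using Csub by blast
  have hpos: "h z > 0" if "z \<in> C" for z
  proof -
    have "norm z = 1" using that Csph by auto
    then have "norm (z / \<sigma>) = 1" using s1 by (simp add: norm_divide)
    moreover have "z / \<sigma> \<noteq> 1" using that sC s0 by auto
    ultimately show ?thesis unfolding h_def by (rule arg_pos)
  qed
  define T where "T = insert (zeta e) ((\<lambda>d. zeta (U d)) ` {1..D})"
  have TC: "T \<subseteq> C" unfolding T_def using UC eC by blast
  have Tfin: "finite (h ` T)" "h ` T \<noteq> {}" unfolding T_def by auto
  define m where "m = Min (h ` T)"
  define M where "M = Max (h ` T)"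
  have mM: "m \<le> h z \<and> h z \<le> M" if "z \<in> T" for z
    unfolding m_def M_def using Tfin that by auto
  obtain x where x: "x \<in> T" "h x = m" unfolding m_def using Min_in[OF Tfin] by auto
  obtain y where y: "y \<in> T" "h y = M" unfolding M_def using Max_in[OF Tfin] by auto
  have m0: "m > 0" using hpos x TC by auto
  have M2: "M < 2 * pi" using y unfolding h_def using Arg2pi by auto
  have notin: "h (zeta (S k)) < m \<or> h (zeta (S k)) > M" if k: "k \<in> {1..D}" for k
  proof (rule ccontr)
    assume "\<not> (h (zeta (S k)) < m \<or> h (zeta (S k)) > M)"
    then have le: "h x \<le> h (zeta (S k))" "h (zeta (S k)) \<le> h y" using x y by auto
    have "norm (zeta (S k)) = 1" using zeta_unit S k by blast
    then have "zeta (S k) \<in> C"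
      using circ_interval[OF Cconn Csph sC s1 _ _ _ le[unfolded h_def]] x y TC by blast
    moreover have "zeta (S k) \<in> F" unfolding F_def using k by blast
    ultimately show False using Csub by blast
  qed
  define gap where "gap k = min \<bar>h (zeta (S k)) - m\<bar> \<bar>h (zeta (S k)) - M\<bar>" for k
  define \<delta>0 where "\<delta>0 = Min (gap ` {1..D})"
  have gpos: "gap k > 0" if "k \<in> {1..D}" for k
  proof -
    have "m \<le> M" using mM[OF x(1)] by simp
    then show ?thesis using notin[OF that] unfolding gap_def by auto
  qed
  have d0: "\<delta>0 > 0" unfolding \<delta>0_def using gpos D1 by (subst Min_gr_iff) auto
  have d0le: "\<delta>0 \<le> gap k" if "k \<in> {1..D}" for k unfolding \<delta>0_def using that by auto
  define \<delta> where "\<delta> = min (min \<delta>0 m) (2 * pi - M) / 2"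
  have dpos: "\<delta> > 0" unfolding \<delta>_def using d0 m0 M2 by auto
  have dle: "2 * \<delta> \<le> \<delta>0" "2 * \<delta> \<le> m" "2 * \<delta> \<le> 2 * pi - M" unfolding \<delta>_def by auto
  define tp where "tp = m - \<delta>"
  define tq where "tq = M + \<delta>"
  have tp: "0 < tp" "tp < m" unfolding tp_def using dle dpos by auto
  have tq: "M < tq" "tq < 2 * pi" unfolding tq_def using dle dpos by auto
  have mleM: "m \<le> M" using mM x by auto
  define p where "p = rv (f0 + tp / 2)"
  define q where "q = rv (f0 + tq / 2)"
  have wpq: "w p q > 0" unfolding p_def q_def w_Rv
    using tp tq mleM by (intro sin_half_pos) auto
  have bnd: "\<bar>w v q\<bar> \<le> 2 * norm v \<and> \<bar>w v p\<bar> \<le> 2 * norm v" for v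
    unfolding p_def q_def using w_bound rv_comp by blast
  have inside: "w (rv (f0 + Th v / 2)) q > 0 \<and> w p (rv (f0 + Th v / 2)) > 0"
    if "m \<le> Th v" "Th v \<le> M" for v
  proof -
    have "w (rv (f0 + Th v / 2)) q = sin ((tq - Th v) / 2)" unfolding q_def w_Rv ..
    moreover have "sin ((tq - Th v) / 2) > 0" using that tq tp m0 by (intro sin_half_pos) auto
    moreover have "w p (rv (f0 + Th v / 2)) = sin ((Th v - tp) / 2)" unfolding p_def w_Rv ..
    moreover have "sin ((Th v - tp) / 2) > 0" using that tq tp Th_rng[of v] by (intro sin_half_pos) auto
    ultimately show ?thesis by simp
  qed
  have outside: "w (rv (f0 + Th (S k) / 2)) q * w p (rv (f0 + Th (S k) / 2)) < 0"
    if k: "k \<in> {1..D}" for k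
  proof -
    let ?t = "Th (S k)"
    have e1: "w (rv (f0 + ?t / 2)) q = sin ((tq - ?t) / 2)" unfolding q_def w_Rv ..
    have e2: "w p (rv (f0 + ?t / 2)) = sin ((?t - tp) / 2)" unfolding p_def w_Rv ..
    have g: "\<delta>0 \<le> \<bar>?t - m\<bar>" "\<delta>0 \<le> \<bar>?t - M\<bar>" using d0le[OF k] unfolding gap_def Th_def by auto
    have r: "0 \<le> ?t" "?t < 2 * pi" using Th_rng by auto
    from notin[OF k] have "?t < tp \<or> ?t > tq" unfolding Th_def[symmetric]
      using g dle dpos unfolding tp_def tq_def by auto
    then show ?thesis
    proof
      assume a: "?t < tp"
      have "sin ((tq - ?t) / 2) > 0" using a r tq tp mleM by (intro sin_half_pos) auto
      moreover have "sin ((?t - tp) / 2) < 0" using a r tq tp mleM by (intro sin_half_neg) auto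
      ultimately show ?thesis unfolding e1 e2 by (simp add: mult_pos_neg)
    next
      assume a: "?t > tq"
      have "sin ((tq - ?t) / 2) < 0" using a r tq tp mleM by (intro sin_half_neg) auto
      moreover have "sin ((?t - tp) / 2) > 0" using a r tq tp mleM by (intro sin_half_pos) auto
      ultimately show ?thesis unfolding e1 e2 by (simp add: mult_neg_pos)
    qed
  qed
  have dpart: "\<forall>d\<in>{1..D}. \<exists>u s. (\<exists>t. t \<noteq> 0 \<and> U d = t *\<^sub>R u) \<and> (\<exists>t. t \<noteq> 0 \<and> S d = t *\<^sub>R s) \<and>
        w u q > 0 \<and> w p u > 0 \<and> w s q * w p s < 0"
  proof
    fix d assume d: "d \<in> {1..D}"
    have "zeta (U d) \<in> T" unfolding T_def using d by blast
    then have "m \<le> Th (U d)" "Th (U d) \<le> M" using mM unfolding Th_def by auto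
    then have i: "w (rv (f0 + Th (U d) / 2)) q > 0 \<and> w p (rv (f0 + Th (U d) / 2)) > 0" by (rule inside)
    show "\<exists>u s. (\<exists>t. t \<noteq> 0 \<and> U d = t *\<^sub>R u) \<and> (\<exists>t. t \<noteq> 0 \<and> S d = t *\<^sub>R s) \<and>
        w u q > 0 \<and> w p u > 0 \<and> w s q * w p s < 0"
      using rep[of "U d"] rep[of "S d"] U S d i outside[OF d] by blast
  qed
  have epart: "w e q * w p e > 0"
  proof -
    have "zeta e \<in> T" unfolding T_def by blast
    then have "m \<le> Th e" "Th e \<le> M" using mM unfolding Th_def by auto
    then have i: "w (rv (f0 + Th e / 2)) q > 0 \<and> w p (rv (f0 + Th e / 2)) > 0" by (rule inside)
    obtain t where t: "t \<noteq> 0" "e = t *\<^sub>R rv (f0 + Th e / 2)" using rep[OF e] by blast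
    have "w e q * w p e = (t * t) * (w (rv (f0 + Th e / 2)) q * w p (rv (f0 + Th e / 2)))"
      by (subst (1 2) t(2)) (simp add: algebra_simps)
    moreover have "t * t > 0" using t(1) by (simp add: zero_less_mult_iff linorder_neq_iff disj_commute)
    moreover have "w (rv (f0 + Th e / 2)) q * w p (rv (f0 + Th e / 2)) > 0" using i by simp
    ultimately show ?thesis by simp
  qed
  show ?thesis using wpq bnd dpart epart by blast
qed



lemma norm_e1: "norm (vector [1, 0] :: real^2) = 1"
  by (simp add: norm_vec_def L2_set_def sum_2)

lemma e1_nz: "(vector [1, 0] :: real^2) \<noteq> 0"
  by (auto simp: vec_eq_iff forall_2)

lemma rp1_e1: "rp1 (span {vector [1, 0] :: real^2}) = 1"
proof -
  have "rp1 (span {vector [1, 0] :: real^2}) = zeta (vector [1, 0])"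
  proof (rule rp1_line)
    show "vector [1, 0] \<in> span {vector [1, 0] :: real^2}" by (rule span_base) simp
    show "(vector [1, 0] :: real^2) \<noteq> 0" by (rule e1_nz)
    show "\<forall>x\<in>span {vector [1, 0] :: real^2}. x \<noteq> 0 \<longrightarrow> (\<exists>t. x = t *\<^sub>R vector [1, 0])"
      by (auto simp: span_singleton)
  qed
  then show ?thesis using zeta_e1 by simp
qed

lemma eig_scale:
  fixes A :: mat2
  assumes "A *v v = l *\<^sub>R v" "v = t *\<^sub>R u" "t \<noteq> 0"
  shows "A *v u = l *\<^sub>R u"
proof -
  have "t *\<^sub>R (A *v u) = A *v v" using assms(2) by (simp add: matrix_vector_mult_scaleR)
  also have "\<dots> = t *\<^sub>R (l *\<^sub>R u)" using assms(1,2) by simp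
  finally have "t *\<^sub>R (A *v u) = t *\<^sub>R (l *\<^sub>R u)" .
  then have "A *v u = l *\<^sub>R u \<or> t = 0" unfolding scaleR_cancel_left by blast
  then show ?thesis using assms(3) by blast
qed

lemma unit_in_line:
  assumes "is_line L" shows "\<exists>x\<in>L. norm x = 1"
proof -
  have "\<not> L \<subseteq> {0}" using assms dim_eq_0[of L] unfolding is_line_def by auto
  then obtain x where x: "x \<in> L" "x \<noteq> 0" by auto
  have "(1 / norm x) *\<^sub>R x \<in> L" using assms x(1) unfolding is_line_def by (simp add: subspace_scale)
  moreover have "norm ((1 / norm x) *\<^sub>R x) = 1" using x(2) by simp
  ultimately show ?thesis by blast
qed

theorem corollary4p5:
  fixes B :: "nat \<Rightarrow> triple list" and D :: nat and lam :: real
  assumes "D \<ge> 1"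
    and "\<forall>d\<in>{1..D}. resonator_block (B d)"
    and "lam \<ge> 0"
    and "\<forall>d\<in>{1..D}. hyperbolic (block_mat lam (B d))"
    and "source_sink (\<lambda>d. block_mat lam (B d)) D"
    and "\<exists>C \<in> components (sphere 0 1 - (\<lambda>d. rp1 (src (block_mat lam (B d)))) ` {1..D}).
           (\<forall>d\<in>{1..D}. rp1 (snk (block_mat lam (B d))) \<in> C) \<and>
           rp1 (span {vector [1, 0] :: real^2}) \<in> C"
  shows "\<forall>chi :: int \<Rightarrow> nat. (\<forall>j. chi j \<in> {1..D}) \<longrightarrow>
           \<not> (\<exists>u s. unif_hyp_splitting (\<lambda>j. block_mat lam (B (chi j))) u s \<and>
                    (vector [1, 0] :: real^2) \<in> s 0)"
proof (intro allI impI notI)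
  fix chi :: "int \<Rightarrow> nat"
  assume chi: "\<forall>j. chi j \<in> {1..D}"
  assume "\<exists>u s. unif_hyp_splitting (\<lambda>j. block_mat lam (B (chi j))) u s \<and> (vector [1, 0] :: real^2) \<in> s 0"
  then obtain uu ss where uh: "unif_hyp_splitting (\<lambda>j. block_mat lam (B (chi j))) uu ss"
    and e1s: "(vector [1, 0] :: real^2) \<in> ss 0" by blast
  define A where "A d = block_mat lam (B d)" for d
  define e1 where "e1 = (vector [1, 0] :: real^2)"
  have detA: "det (A d) = 1" for d unfolding A_def by (rule det_block)
  have "\<forall>d\<in>{1..D}. \<exists>u. eigsnk (A d) u" using eig_exist detA assms(4) unfolding A_def by blast
  from bchoice[OF this] obtain U where U: "\<forall>d\<in>{1..D}. eigsnk (A d) (U d)" by blast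
  have "\<forall>d\<in>{1..D}. \<exists>s. eigsrc (A d) s" using eig_exist detA assms(4) unfolding A_def by blast
  from bchoice[OF this] obtain S where S: "\<forall>d\<in>{1..D}. eigsrc (A d) (S d)" by blast
  have snkU: "rp1 (snk (A d)) = zeta (U d)" if "d \<in> {1..D}" for d using rp1_snk detA U that by blast
  have srcS: "rp1 (src (A d)) = zeta (S d)" if "d \<in> {1..D}" for d using rp1_src detA S that by blast
  have img: "(\<lambda>d. rp1 (src (A d))) ` {1..D} = (\<lambda>d. zeta (S d)) ` {1..D}"
    using srcS by (intro image_cong) auto
  obtain C where C: "C \<in> components (sphere 0 1 - (\<lambda>d. zeta (S d)) ` {1..D})"
    and UC: "\<forall>d\<in>{1..D}. zeta (U d) \<in> C" and eC0: "rp1 (span {e1}) \<in> C"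
    using assms(6) img snkU unfolding A_def[symmetric] e1_def by force
  have eC: "zeta e1 \<in> C" using eC0 rp1_e1 zeta_e1 unfolding e1_def by simp
  have Unz: "\<forall>d\<in>{1..D}. U d \<noteq> 0" using U eigsnk_def by blast
  have Snz: "\<forall>d\<in>{1..D}. S d \<noteq> 0" using S eigsrc_def by blast
  obtain p q where wpq: "w p q > 0" and bnd: "\<forall>v. \<bar>w v q\<bar> \<le> 2 * norm v \<and> \<bar>w v p\<bar> \<le> 2 * norm v"
    and dd: "\<forall>d\<in>{1..D}. \<exists>u s. (\<exists>t. t \<noteq> 0 \<and> U d = t *\<^sub>R u) \<and> (\<exists>t. t \<noteq> 0 \<and> S d = t *\<^sub>R s) \<and>
        w u q > 0 \<and> w p u > 0 \<and> w s q * w p s < 0"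
    and ee: "w e1 q * w p e1 > 0"
    using cone_exists[OF assms(1) Unz Snz _ C UC eC] e1_nz unfolding e1_def by blast
  have hs: "w (A d *v p) q * w p (A d *v p) > 0 \<and> w (A d *v q) q * w p (A d *v q) > 0 \<and>
     w (A d *v q) q * w p (A d *v p) > 0" if d: "d \<in> {1..D}" for d
  proof -
    obtain u s tu ts where us: "tu \<noteq> 0" "U d = tu *\<^sub>R u" "ts \<noteq> 0" "S d = ts *\<^sub>R s"
      "w u q > 0" "w p u > 0" "w s q * w p s < 0" using dd d by blast
    obtain l where l: "\<bar>l\<bar> > 1" "A d *v U d = l *\<^sub>R U d" using U d eigsnk_def by blast
    obtain n where n: "A d *v S d = n *\<^sub>R S d" using S d eigsrc_def by blast
    have Au: "A d *v u = l *\<^sub>R u" using eig_scale[OF l(2) us(2,1)] .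
    have As: "A d *v s = n *\<^sub>R s" using eig_scale[OF n us(4,3)] .
    show ?thesis using cone_step[OF detA Au As l(1) wpq us(5,6,7)] by blast
  qed
  define kap where "kap d = 1 + 2 * (w (A d *v q) q * w p (A d *v p)) / (w p q)^2" for d
  define k0 where "k0 = Min (kap ` {1..D})"
  have kap1: "kap d > 1" if "d \<in> {1..D}" for d
    using hs[OF that] wpq unfolding kap_def by simp
  have k0: "k0 > 1" unfolding k0_def using kap1 assms(1) by (subst Min_gr_iff) auto
  have k0le: "k0 \<le> kap d" if "d \<in> {1..D}" for d unfolding k0_def using that by simp
  define g where "g v = w v q * w p v" for v
  define Ac where "Ac j = block_mat lam (B (chi j))" for j
  have Ac: "Ac j = A (chi j)" for j unfolding Ac_def A_def ..
  define vs where "vs n = fwd Ac 0 n *v e1" for n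
  have g0: "g e1 > 0" using ee unfolding g_def .
  have grow: "g (vs n) \<ge> k0 ^ n * g e1" for n
  proof (induction n)
    case 0 then show ?case by (simp add: vs_def)
  next
    case (Suc n)
    have vsS: "vs (Suc n) = A (chi (int n)) *v vs n"
      by (simp add: vs_def Ac matrix_vector_mul_assoc)
    have "k0 ^ n * g e1 > 0" using g0 k0 by simp
    then have gn: "g (vs n) \<ge> 0" using Suc.IH by linarith
    have d: "chi (int n) \<in> {1..D}" using chi by blast
    have "g (vs (Suc n)) \<ge> kap (chi (int n)) * g (vs n)"
      unfolding vsS g_def kap_def
      using growth[OF detA wpq] hs[OF d] gn unfolding g_def by blast
    moreover have "kap (chi (int n)) * g (vs n) \<ge> k0 * g (vs n)"
      using k0le[OF d] gn by (intro mult_right_mono) auto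
    moreover have "k0 * g (vs n) \<ge> k0 * (k0 ^ n * g e1)"
      using Suc.IH k0 by (intro mult_left_mono) auto
    ultimately show ?case by simp
  qed
  have gle: "g v \<le> 4 * (norm v)^2" for v
  proof -
    have anti: "w p v = - w v p" by (simp add: w_def)
    have "g v \<le> \<bar>g v\<bar>" by simp
    also have "\<bar>g v\<bar> = \<bar>w v q\<bar> * \<bar>w v p\<bar>" unfolding g_def anti by (simp add: abs_mult)
    finally have "g v \<le> \<bar>w v q\<bar> * \<bar>w v p\<bar>" .
    also have "\<dots> \<le> (2 * norm v) * (2 * norm v)" using bnd by (intro mult_mono) auto
    finally show ?thesis by (simp add: power2_eq_square)
  qed
  obtain Cc \<eta> where Cc: "Cc > 0" and eta: "\<eta> > 1" and bd: "\<forall>j n. \<forall>x y.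
        x \<in> uu j \<and> norm x = 1 \<and> y \<in> ss j \<and> norm y = 1 \<longrightarrow>
          norm (bwd Ac j n *v x) \<le> Cc * \<eta> powr (- real n) \<and>
          norm (fwd Ac j n *v y) \<le> Cc * \<eta> powr (- real n)"
    using uh unfolding unif_hyp_splitting_def Ac_def by blast
  have "is_line (uu 0)" using uh unfolding unif_hyp_splitting_def by blast
  then obtain x where x: "x \<in> uu 0" "norm x = 1" using unit_in_line by blast
  have nb: "norm (vs n) \<le> Cc * inverse (\<eta> ^ n)" for n
  proof -
    have "x \<in> uu 0 \<and> norm x = 1 \<and> e1 \<in> ss 0 \<and> norm e1 = 1"
      using x e1s norm_e1 unfolding e1_def by blast
    then have "norm (fwd Ac 0 n *v e1) \<le> Cc * \<eta> powr (- real n)"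
      using bd by blast
    moreover have "\<eta> powr (- real n) = inverse (\<eta> ^ n)"
      using eta by (simp add: powr_minus powr_realpow)
    ultimately show ?thesis unfolding vs_def by simp
  qed
  have main: "(k0 * \<eta>^2) ^ n \<le> 4 * Cc^2 / g e1" for n
  proof -
    have "k0 ^ n * g e1 \<le> 4 * (norm (vs n))^2" using grow[of n] gle[of "vs n"] by linarith
    also have "\<dots> \<le> 4 * (Cc * inverse (\<eta> ^ n))^2"
      using nb[of n] by (intro mult_left_mono power_mono) auto
    finally have A1: "k0 ^ n * g e1 \<le> 4 * (Cc * inverse (\<eta> ^ n))^2" .
    define E where "E = (\<eta>^2)^n"
    have Epos: "E > 0" unfolding E_def using eta by simp
    have "(\<eta> ^ n)^2 = E" unfolding E_def by (metis power_mult mult.commute)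
    then have "(Cc * inverse (\<eta> ^ n))^2 = Cc^2 / E"
      by (simp add: power_mult_distrib power_inverse divide_inverse)
    then have "k0 ^ n * g e1 \<le> 4 * Cc^2 / E" using A1 by simp
    then have "k0 ^ n * g e1 * E \<le> 4 * Cc^2" using Epos by (simp add: pos_le_divide_eq)
    moreover have "(k0 * \<eta>^2) ^ n * g e1 = k0 ^ n * g e1 * E" unfolding E_def by (simp add: power_mult_distrib)
    ultimately have "(k0 * \<eta>^2) ^ n * g e1 \<le> 4 * Cc^2" by linarith
    then show ?thesis using g0 by (simp add: pos_le_divide_eq)
  qed
  have "\<eta>^2 > 1" using eta by (simp add: one_less_power)
  then have "k0 * \<eta>^2 > 1" using k0 by (simp add: less_1_mult)
  then obtain n where "4 * Cc^2 / g e1 < (k0 * \<eta>^2) ^ n" using real_arch_pow by blast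
  then show False using main[of n] by simp
qed


end
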